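(* Assume that for some $a_1>0$ and a constant $C>0$, with probability tending to one, $\max_{j\in[p]}\|\widehat{\partial_jm}-\partial_jm\|_2^2\le Cn^{-a_1}$, and let $a_2,b>0$. Then: (a) for every node $v\notin\mathcal I^\star$ there is $c>0$ such that $P\big(\hat w_v\ge c\, n^{\min(a_1,a_2)b}\big)\to1$; (b) for every node $v\in\mathcal I^\star$, $\hat w_v=O_P\big(1+n^{(a_2-a_1)b}\big)$.
   Context: A known rooted tree $\mathcal T$ with $T$ nodes has exactly $p$ leaves, identified with the coordinates $1,\dots,p$ of $X\in\mathbb R^p$, where $Y=m(X)+\varepsilon$ for a differentiable regression function $m$. For a node $v$, $\mathrm{le}(v)$ denotes the set of leaves that are equal to $v$ or are descendants of $v$; $\mathrm{sib}(v)$ denotes the set of nodes $u\neq v$ having the same parent as $v$ (empty for the root). Derivatives and norms. $\partial_j m$ is the partial derivative of $m$ w.r.t. the $j$-th coordinate of $X$ ($j=1,\dots,p$), and $\|f\|_2$ is the $L^2(P_X)$ norm; statements "$\partial_jm=\partial_km$", "$\partial_jm\neq0$" are meant as elements of $L^2(P_X)$. $\widehat{\partial_jm}$ are (data-dependent) pilot estimators of $\partial_jm$. Target aggregation set. $\mathcal I^\star$ is the set of nodes $v$ such that: (i) $\partial_jm\neq0$ for all $j\in\mathrm{le}(v)$; (ii) $\partial_jm=\partial_km$ for all $j,k\in\mathrm{le}(v)$; (iii) there exist $s\in\bigcup_{u\in\mathrm{sib}(v)}\mathrm{le}(u)$ and $j\in\mathrm{le}(v)$ with $\partial_sm\neq\partial_jm$.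 Adaptive weights. For each node $v$ set $C_{v,1}=\binom{|\mathrm{le}(v)|}{2}^{-1}\sum_{\{j,k\}\subseteq\mathrm{le}(v),\,j\ne k}\|\widehat{\partial_jm}-\widehat{\partial_km}\|_2^2$ (and $C_{v,1}=0$ if $|\mathrm{le}(v)|=1$), $C_{v,2}=|\mathrm{le}(v)|^{-1}\sum_{j\in\mathrm{le}(v)}\|\widehat{\partial_jm}\|_2^2$, $C_{v,3}=\big(|S_v|\,|\mathrm{le}(v)|\big)^{-1}\sum_{j\in\mathrm{le}(v)}\sum_{l\in S_v}\|\widehat{\partial_jm}-\widehat{\partial_lm}\|_2^2$ with $S_v=\bigcup_{u\in\mathrm{sib}(v)}\mathrm{le}(u)$ (and $C_{v,3}=0$ if $S_v=\emptyset$), and $\hat w_v=(n^{a_2}C_{v,1})^b+C_{v,2}^{-b}+C_{v,3}^{-b}$ (with $0^{-b}=+\infty$). *)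

theory Defs
  imports "HOL-Probability.Probability"
begin

definition par_rel :: "'v set \<Rightarrow> ('v \<Rightarrow> 'v option) \<Rightarrow> ('v \<times> 'v) set" where
  "par_rel V par = {(x, y). x \<in> V \<and> y \<in> V \<and> par x = Some y}"

definition rooted_tree :: "'v set \<Rightarrow> ('v \<Rightarrow> 'v option) \<Rightarrow> 'v \<Rightarrow> bool" where
  "rooted_tree V par r \<longleftrightarrow> finite V \<and> r \<in> V \<and> par r = None \<and>
     (\<forall>v\<in>V - {r}. \<exists>u\<in>V. par v = Some u) \<and>
     (\<forall>v\<in>V. (v, r) \<in> (par_rel V par)\<^sup>*)"

definition tree_leaves :: "'v set \<Rightarrow> ('v \<Rightarrow> 'v option) \<Rightarrow> 'v set" where
  "tree_leaves V par = {v \<in> V. \<not> (\<exists>u\<in>V. par u = Some v)}"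

text \<open>le(v): leaves (identified with coordinates via lf) equal to v or descendants of v.\<close>
definition le_set :: "'v set \<Rightarrow> ('v \<Rightarrow> 'v option) \<Rightarrow> ('n \<Rightarrow> 'v) \<Rightarrow> 'v \<Rightarrow> 'n set" where
  "le_set V par lf v = {j. lf j = v \<or> (lf j, v) \<in> (par_rel V par)\<^sup>+}"

definition sib_set :: "'v set \<Rightarrow> ('v \<Rightarrow> 'v option) \<Rightarrow> 'v \<Rightarrow> 'v set" where
  "sib_set V par v = {u \<in> V. u \<noteq> v \<and> par v \<noteq> None \<and> par u = par v}"

definition S_set :: "'v set \<Rightarrow> ('v \<Rightarrow> 'v option) \<Rightarrow> ('n \<Rightarrow> 'v) \<Rightarrow> 'v \<Rightarrow> 'n set" where
  "S_set V par lf v = (\<Union>u\<in>sib_set V par v. le_set V par lf u)"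

definition L2sq :: "'x measure \<Rightarrow> ('x \<Rightarrow> real) \<Rightarrow> real" where
  "L2sq PX f = (\<integral>x. (f x)\<^sup>2 \<partial>PX)"

definition sq_int :: "'x measure \<Rightarrow> ('x \<Rightarrow> real) \<Rightarrow> bool" where
  "sq_int PX f \<longleftrightarrow> f \<in> borel_measurable PX \<and> integrable PX (\<lambda>x. (f x)\<^sup>2)"

definition pderiv_j :: "(real ^ 'n \<Rightarrow> real) \<Rightarrow> 'n \<Rightarrow> real ^ 'n \<Rightarrow> real" where
  "pderiv_j m j x = frechet_derivative m (at x) (axis j 1)"

definition Istar :: "'v set \<Rightarrow> ('v \<Rightarrow> 'v option) \<Rightarrow> ('n \<Rightarrow> 'v) \<Rightarrow> (real ^ 'n) measure
   \<Rightarrow> ('n \<Rightarrow> real ^ 'n \<Rightarrow> real) \<Rightarrow> 'v set" where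
  "Istar V par lf PX d = {v \<in> V.
     (\<forall>j\<in>le_set V par lf v. L2sq PX (d j) \<noteq> 0) \<and>
     (\<forall>j\<in>le_set V par lf v. \<forall>k\<in>le_set V par lf v. L2sq PX (\<lambda>x. d j x - d k x) = 0) \<and>
     (\<exists>s\<in>S_set V par lf v. \<exists>j\<in>le_set V par lf v. L2sq PX (\<lambda>x. d s x - d j x) \<noteq> 0)}"

text \<open>Here dh j is the (realised) pilot estimator of the j-th partial derivative.\<close>
definition C1 :: "'v set \<Rightarrow> ('v \<Rightarrow> 'v option) \<Rightarrow> ('n \<Rightarrow> 'v) \<Rightarrow> 'x measure
   \<Rightarrow> ('n \<Rightarrow> 'x \<Rightarrow> real) \<Rightarrow> 'v \<Rightarrow> real" where
  "C1 V par lf PX dh v = (let L = le_set V par lf v in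
     if card L = 1 then 0 else
     inverse (real (card L choose 2)) *
       ((1/2) * (\<Sum>j\<in>L. \<Sum>k\<in>L - {j}. L2sq PX (\<lambda>x. dh j x - dh k x))))"

definition C2 :: "'v set \<Rightarrow> ('v \<Rightarrow> 'v option) \<Rightarrow> ('n \<Rightarrow> 'v) \<Rightarrow> 'x measure
   \<Rightarrow> ('n \<Rightarrow> 'x \<Rightarrow> real) \<Rightarrow> 'v \<Rightarrow> real" where
  "C2 V par lf PX dh v = (let L = le_set V par lf v in
     inverse (real (card L)) * (\<Sum>j\<in>L. L2sq PX (dh j)))"

definition C3 :: "'v set \<Rightarrow> ('v \<Rightarrow> 'v option) \<Rightarrow> ('n \<Rightarrow> 'v) \<Rightarrow> 'x measure
   \<Rightarrow> ('n \<Rightarrow> 'x \<Rightarrow> real) \<Rightarrow> 'v \<Rightarrow> real" where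
  "C3 V par lf PX dh v = (let L = le_set V par lf v; S = S_set V par lf v in
     if S = {} then 0 else
     inverse (real (card S) * real (card L)) *
       (\<Sum>j\<in>L. \<Sum>l\<in>S. L2sq PX (\<lambda>x. dh j x - dh l x)))"

definition neg_pow :: "real \<Rightarrow> real \<Rightarrow> ereal" where
  "neg_pow c b = (if c = 0 then \<infinity> else ereal (c powr (- b)))"

definition what :: "'v set \<Rightarrow> ('v \<Rightarrow> 'v option) \<Rightarrow> ('n \<Rightarrow> 'v) \<Rightarrow> 'x measure
   \<Rightarrow> real \<Rightarrow> real \<Rightarrow> nat \<Rightarrow> ('n \<Rightarrow> 'x \<Rightarrow> real) \<Rightarrow> 'v \<Rightarrow> ereal" where
  "what V par lf PX a2 b n dh v =
     ereal ((real n powr a2 * C1 V par lf PX dh v) powr b)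
     + neg_pow (C2 V par lf PX dh v) b + neg_pow (C3 V par lf PX dh v) b"

end

theory Submission
  imports Defs
begin

lemma L2sq_nonneg: "0 \<le> L2sq PX f"
  unfolding L2sq_def by simp

lemma neg_pow_nonneg: "0 \<le> neg_pow c b"
  unfolding neg_pow_def by simp

lemma neg_pow_lower:
  assumes "0 \<le> c" "c \<le> u" "0 < u" "0 \<le> b"
  shows "ereal (u powr (-b)) \<le> neg_pow c b"
  using assms powr_mono2'[of "-b" c u] unfolding neg_pow_def by auto

lemma neg_pow_upper:
  assumes "d \<le> c" "0 < d" "0 \<le> b"
  shows "neg_pow c b = ereal (c powr (-b)) \<and> c powr (-b) \<le> d powr (-b)"
  using assms powr_mono2'[of "-b" d c] unfolding neg_pow_def by auto

lemma what_ge1: "ereal ((real n powr a2 * C1 V par lf PX dh v) powr b) \<le> what V par lf PX a2 b n dh v"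
  unfolding what_def using neg_pow_nonneg[of "C2 V par lf PX dh v" b] neg_pow_nonneg[of "C3 V par lf PX dh v" b]
  by (intro add_increasing2) (auto intro: add_increasing2)

lemma what_ge2: "neg_pow (C2 V par lf PX dh v) b \<le> what V par lf PX a2 b n dh v"
  unfolding what_def using neg_pow_nonneg[of "C3 V par lf PX dh v" b]
  by (simp add: add_increasing2 add_increasing)

lemma what_ge3: "neg_pow (C3 V par lf PX dh v) b \<le> what V par lf PX a2 b n dh v"
  unfolding what_def using neg_pow_nonneg[of "C2 V par lf PX dh v" b]
  by (simp add: add_increasing2 add_increasing)

lemma C1_nonneg: "0 \<le> C1 V par lf PX dh v"
  unfolding C1_def Let_def by (auto intro!: sum_nonneg mult_nonneg_nonneg simp: L2sq_nonneg)

lemma C2_nonneg: "0 \<le> C2 V par lf PX dh v"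
  unfolding C2_def Let_def by (auto intro!: sum_nonneg mult_nonneg_nonneg simp: L2sq_nonneg)

lemma C3_nonneg: "0 \<le> C3 V par lf PX dh v"
  unfolding C3_def Let_def by (auto intro!: sum_nonneg mult_nonneg_nonneg simp: L2sq_nonneg)

lemma C1_lower:
  fixes lf :: "'n::finite \<Rightarrow> 'v"
  assumes "j \<in> le_set V par lf v" "k \<in> le_set V par lf v" "j \<noteq> k"
  shows "inverse (real (card (le_set V par lf v) choose 2)) * ((1/2) * L2sq PX (\<lambda>x. dh j x - dh k x))
         \<le> C1 V par lf PX dh v"
proof -
  let ?L = "le_set V par lf v"
  have "card ?L \<noteq> 1" using assms by (metis card_1_singletonE singletonD)
  have "L2sq PX (\<lambda>x. dh j x - dh k x) \<le> (\<Sum>k\<in>?L - {j}. L2sq PX (\<lambda>x. dh j x - dh k x))"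
    using assms by (intro member_le_sum) (auto simp: L2sq_nonneg)
  also have "\<dots> \<le> (\<Sum>j\<in>?L. \<Sum>k\<in>?L - {j}. L2sq PX (\<lambda>x. dh j x - dh k x))"
    using assms(1) by (rule member_le_sum[where f="\<lambda>j. \<Sum>k\<in>?L - {j}. L2sq PX (\<lambda>x. dh j x - dh k x)"])
       (auto intro!: sum_nonneg simp: L2sq_nonneg)
  finally show ?thesis using \<open>card ?L \<noteq> 1\<close> unfolding C1_def Let_def
    by (auto intro!: mult_left_mono)
qed

lemma C1_upper:
  fixes lf :: "'n::finite \<Rightarrow> 'v"
  assumes "\<And>j k. j \<in> le_set V par lf v \<Longrightarrow> k \<in> le_set V par lf v \<Longrightarrow> L2sq PX (\<lambda>x. dh j x - dh k x) \<le> B"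
    and "0 \<le> B"
  shows "C1 V par lf PX dh v \<le> inverse (real (card (le_set V par lf v) choose 2)) * ((1/2) * (real (card (le_set V par lf v)) * (real (card (le_set V par lf v)) * B)))"
proof -
  let ?L = "le_set V par lf v"
  have "(\<Sum>j\<in>?L. \<Sum>k\<in>?L - {j}. L2sq PX (\<lambda>x. dh j x - dh k x)) \<le> (\<Sum>j\<in>?L. real (card ?L) * B)"
  proof (rule sum_mono)
    fix j assume j: "j \<in> ?L"
    have "(\<Sum>k\<in>?L - {j}. L2sq PX (\<lambda>x. dh j x - dh k x)) \<le> (\<Sum>k\<in>?L - {j}. B)"
      using j assms(1) by (intro sum_mono) auto
    also have "\<dots> = real (card (?L - {j})) * B" by simp
    also have "\<dots> \<le> real (card ?L) * B"
      using assms(2) by (intro mult_right_mono) (auto intro: card_mono)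
    finally show "(\<Sum>k\<in>?L - {j}. L2sq PX (\<lambda>x. dh j x - dh k x)) \<le> real (card ?L) * B" .
  qed
  then show ?thesis unfolding C1_def Let_def using assms(2)
    by (auto intro!: mult_left_mono mult_nonneg_nonneg)
qed

lemma C2_upper:
  fixes lf :: "'n::finite \<Rightarrow> 'v"
  assumes "\<And>j. j \<in> le_set V par lf v \<Longrightarrow> L2sq PX (dh j) \<le> B" and "0 \<le> B"
  shows "C2 V par lf PX dh v \<le> B"
proof -
  let ?L = "le_set V par lf v"
  have "(\<Sum>j\<in>?L. L2sq PX (dh j)) \<le> real (card ?L) * B"
    using sum_mono[of ?L "\<lambda>j. L2sq PX (dh j)" "\<lambda>_. B"] assms(1) by auto
  then have "inverse (real (card ?L)) * (\<Sum>j\<in>?L. L2sq PX (dh j)) \<le> inverse (real (card ?L)) * (real (card ?L) * B)"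
    by (intro mult_left_mono) auto
  also have "\<dots> \<le> B" using assms(2) by (cases "card ?L = 0") (auto simp: field_simps)
  finally show ?thesis unfolding C2_def Let_def .
qed

lemma C2_lower:
  fixes lf :: "'n::finite \<Rightarrow> 'v"
  assumes "j \<in> le_set V par lf v"
  shows "inverse (real (card (le_set V par lf v))) * L2sq PX (dh j) \<le> C2 V par lf PX dh v"
  unfolding C2_def Let_def using assms
  by (intro mult_left_mono member_le_sum) (auto simp: L2sq_nonneg)

lemma C3_upper:
  fixes lf :: "'n::finite \<Rightarrow> 'v"
  assumes "\<And>j l. j \<in> le_set V par lf v \<Longrightarrow> l \<in> S_set V par lf v \<Longrightarrow> L2sq PX (\<lambda>x. dh j x - dh l x) \<le> B"
    and "0 \<le> B"
  shows "C3 V par lf PX dh v \<le> B"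
proof -
  let ?L = "le_set V par lf v" and ?S = "S_set V par lf v"
  have "(\<Sum>j\<in>?L. \<Sum>l\<in>?S. L2sq PX (\<lambda>x. dh j x - dh l x)) \<le> (\<Sum>j\<in>?L. \<Sum>l\<in>?S. B)"
    using assms(1) by (intro sum_mono) auto
  also have "\<dots> = real (card ?S) * real (card ?L) * B" by simp
  finally have s: "(\<Sum>j\<in>?L. \<Sum>l\<in>?S. L2sq PX (\<lambda>x. dh j x - dh l x)) \<le> real (card ?S) * real (card ?L) * B" .
  have "inverse (real (card ?S) * real (card ?L)) * (\<Sum>j\<in>?L. \<Sum>l\<in>?S. L2sq PX (\<lambda>x. dh j x - dh l x))
        \<le> inverse (real (card ?S) * real (card ?L)) * (real (card ?S) * real (card ?L) * B)"
    using s by (intro mult_left_mono) auto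
  also have "\<dots> \<le> B" using assms(2) by (cases "real (card ?S) * real (card ?L) = 0") (auto simp: field_simps)
  finally show ?thesis unfolding C3_def Let_def using assms(2) by auto
qed

lemma C3_lower:
  fixes lf :: "'n::finite \<Rightarrow> 'v"
  assumes "j \<in> le_set V par lf v" "l \<in> S_set V par lf v"
  shows "inverse (real (card (S_set V par lf v)) * real (card (le_set V par lf v))) * L2sq PX (\<lambda>x. dh j x - dh l x) \<le> C3 V par lf PX dh v"
proof -
  let ?L = "le_set V par lf v" and ?S = "S_set V par lf v"
  have "L2sq PX (\<lambda>x. dh j x - dh l x) \<le> (\<Sum>l\<in>?S. L2sq PX (\<lambda>x. dh j x - dh l x))"
    using assms by (intro member_le_sum) (auto simp: L2sq_nonneg)
  also have "\<dots> \<le> (\<Sum>j\<in>?L. \<Sum>l\<in>?S. L2sq PX (\<lambda>x. dh j x - dh l x))"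
    using assms(1) by (rule member_le_sum[where f="\<lambda>j. \<Sum>l\<in>?S. L2sq PX (\<lambda>x. dh j x - dh l x)"])
       (auto intro!: sum_nonneg simp: L2sq_nonneg)
  finally show ?thesis using assms(2) unfolding C3_def Let_def
    by (auto intro!: mult_left_mono)
qed

lemma prob_to_1:
  assumes M: "prob_space M" and G: "(\<lambda>n. measure M (G n)) \<longlonglongrightarrow> 1"
    and ev: "\<forall>\<^sub>F n in sequentially. G n \<subseteq> E n" and E: "\<And>n. E n \<in> sets M"
  shows "(\<lambda>n. measure M (E n)) \<longlonglongrightarrow> 1"
proof (rule tendsto_sandwich[OF _ _ G tendsto_const])
  show "\<forall>\<^sub>F n in sequentially. measure M (G n) \<le> measure M (E n)"
    using ev by eventually_elim (rule finite_measure.finite_measure_mono[OF prob_space.axioms(1)[OF M] _ E])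
  show "\<forall>\<^sub>F n in sequentially. measure M (E n) \<le> 1"
    using prob_space.prob_le_1[OF M] by simp
qed

lemma prob_ge:
  assumes M: "prob_space M" and G: "(\<lambda>n. measure M (G n)) \<longlonglongrightarrow> 1"
    and ev: "\<forall>\<^sub>F n in sequentially. G n \<subseteq> E n" and E: "\<And>n. E n \<in> sets M"
    and eps: "\<epsilon> > 0"
  shows "\<exists>N. \<forall>n\<ge>N. measure M (E n) \<ge> 1 - \<epsilon>"
proof -
  have "(\<lambda>n. measure M (E n)) \<longlonglongrightarrow> 1" by (rule prob_to_1[OF M G ev E])
  then have "\<forall>\<^sub>F n in sequentially. 1 - \<epsilon> < measure M (E n)"
    using eps by (intro order_tendstoD(1)) auto
  then show ?thesis unfolding eventually_sequentially by (meson less_imp_le)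
qed

lemma pow_lower1:
  fixes n :: nat and a1 a2 b \<kappa> X :: real
  assumes "real n \<ge> 1" "\<kappa> > 0" "X \<ge> \<kappa>" "b > 0" "a2 > 0"
  shows "\<kappa> powr b * real n powr (min a1 a2 * b) \<le> (real n powr a2 * X) powr b"
proof -
  have "real n powr (min a1 a2 * b) \<le> real n powr (a2 * b)"
    using assms by (intro powr_mono) (auto intro!: mult_right_mono)
  then have "\<kappa> powr b * real n powr (min a1 a2 * b) \<le> \<kappa> powr b * real n powr (a2 * b)"
    by (intro mult_left_mono) auto
  also have "\<dots> = (real n powr a2 * \<kappa>) powr b"
    by (simp add: powr_mult powr_powr)
  also have "\<dots> \<le> (real n powr a2 * X) powr b"
    using assms by (intro powr_mono2 mult_left_mono) auto
  finally show ?thesis .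
qed

lemma pow_lower2:
  fixes n :: nat and a1 a2 b K C c :: real
  assumes "real n \<ge> 1" "K > 0" "C > 0" "0 \<le> c" "c \<le> K * (C * real n powr (-a1))" "b > 0" "a1 > 0"
  shows "ereal ((K * C) powr (-b) * real n powr (min a1 a2 * b)) \<le> neg_pow c b"
proof -
  have u: "0 < K * (C * real n powr (-a1))" using assms by auto
  have "(K * C) powr (-b) * real n powr (min a1 a2 * b) \<le> (K * C) powr (-b) * real n powr (a1 * b)"
    using assms by (intro mult_left_mono powr_mono) (auto intro!: mult_right_mono)
  also have "\<dots> = (K * (C * real n powr (-a1))) powr (-b)"
    by (simp add: powr_mult powr_powr)
  finally have "ereal ((K * C) powr (-b) * real n powr (min a1 a2 * b)) \<le> ereal ((K * (C * real n powr (-a1))) powr (-b))"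
    by simp
  also have "\<dots> \<le> neg_pow c b"
    using assms u by (intro neg_pow_lower) auto
  finally show ?thesis .
qed

lemma pow_upper1:
  fixes n :: nat and a1 a2 b K C X :: real
  assumes "real n \<ge> 1" "K \<ge> 0" "C > 0" "0 \<le> X" "X \<le> K * (C * real n powr (-a1))" "b > 0"
  shows "(real n powr a2 * X) powr b \<le> (K * C) powr b * real n powr ((a2 - a1) * b)"
proof -
  have "(real n powr a2 * X) powr b \<le> (real n powr a2 * (K * (C * real n powr (-a1)))) powr b"
    using assms by (intro powr_mono2 mult_left_mono) auto
  also have "real n powr a2 * (K * (C * real n powr (-a1))) = (K * C) * real n powr (a2 - a1)"
    using assms by (simp add: powr_diff powr_minus field_simps)
  also have "((K * C) * real n powr (a2 - a1)) powr b = (K * C) powr b * real n powr ((a2 - a1) * b)"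
    by (simp add: powr_mult powr_powr)
  finally show ?thesis .
qed


lemma sq_int_diff:
  assumes "sq_int PX f" "sq_int PX g"
  shows "sq_int PX (\<lambda>x. f x - g x)"
proof -
  have mf: "f \<in> borel_measurable PX" and mg: "g \<in> borel_measurable PX"
    and if2: "integrable PX (\<lambda>x. (f x)\<^sup>2)" and ig2: "integrable PX (\<lambda>x. (g x)\<^sup>2)"
    using assms unfolding sq_int_def by auto
  have I1: "integrable PX (\<lambda>x. 2 * (f x)\<^sup>2 + 2 * (g x)\<^sup>2)"
    using if2 ig2 by auto
  have I2: "(\<lambda>x. (f x - g x)\<^sup>2) \<in> borel_measurable PX" using mf mg by measurable
  have I3: "AE x in PX. norm ((f x - g x)\<^sup>2) \<le> norm (2 * (f x)\<^sup>2 + 2 * (g x)\<^sup>2)"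
  proof (rule AE_I2)
    fix x
    have "(f x - g x)\<^sup>2 \<le> 2 * (f x)\<^sup>2 + 2 * (g x)\<^sup>2"
      by (smt (verit) sum_squares_ge_zero power2_diff power2_sum zero_le_power2)
    then show "norm ((f x - g x)\<^sup>2) \<le> norm (2 * (f x)\<^sup>2 + 2 * (g x)\<^sup>2)" by simp
  qed
  have "integrable PX (\<lambda>x. (f x - g x)\<^sup>2)" by (rule Bochner_Integration.integrable_bound[OF I1 I2 I3])
  then show ?thesis unfolding sq_int_def using mf mg by auto
qed

lemma L2sq_tri:
  assumes "sq_int PX f" "sq_int PX g" "sq_int PX h"
  shows "L2sq PX (\<lambda>x. f x - h x) \<le> 2 * L2sq PX (\<lambda>x. f x - g x) + 2 * L2sq PX (\<lambda>x. g x - h x)"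
proof -
  have i1: "integrable PX (\<lambda>x. (f x - h x)\<^sup>2)" using sq_int_diff[OF assms(1,3)] unfolding sq_int_def by auto
  have i2: "integrable PX (\<lambda>x. (f x - g x)\<^sup>2)" using sq_int_diff[OF assms(1,2)] unfolding sq_int_def by auto
  have i3: "integrable PX (\<lambda>x. (g x - h x)\<^sup>2)" using sq_int_diff[OF assms(2,3)] unfolding sq_int_def by auto
  have "L2sq PX (\<lambda>x. f x - h x) \<le> (\<integral>x. 2 * (f x - g x)\<^sup>2 + 2 * (g x - h x)\<^sup>2 \<partial>PX)"
    unfolding L2sq_def
  proof (rule integral_mono[OF i1])
    show "integrable PX (\<lambda>x. 2 * (f x - g x)\<^sup>2 + 2 * (g x - h x)\<^sup>2)" using i2 i3 by auto
    fix x
    show "(f x - h x)\<^sup>2 \<le> 2 * (f x - g x)\<^sup>2 + 2 * (g x - h x)\<^sup>2"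
      by (smt (verit) sum_squares_ge_zero power2_diff power2_sum zero_le_power2)
  qed
  also have "\<dots> = 2 * L2sq PX (\<lambda>x. f x - g x) + 2 * L2sq PX (\<lambda>x. g x - h x)"
    unfolding L2sq_def using i2 i3 by simp
  finally show ?thesis .
qed

lemma L2sq_sym: "L2sq PX (\<lambda>x. f x - g x) = L2sq PX (\<lambda>x. g x - f x)"
  unfolding L2sq_def by (simp add: power2_commute)

lemma sq_int_zero: "sq_int PX (\<lambda>x. 0)"
  unfolding sq_int_def by simp

lemma L2sq_norm_tri:
  assumes "sq_int PX f" "sq_int PX g"
  shows "L2sq PX f \<le> 2 * L2sq PX (\<lambda>x. f x - g x) + 2 * L2sq PX g"
  using L2sq_tri[OF assms sq_int_zero] by simp

lemma L2sq_quad: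
  assumes "sq_int PX a" "sq_int PX b" "sq_int PX c" "sq_int PX e"
  shows "L2sq PX (\<lambda>x. a x - e x) \<le> 2 * L2sq PX (\<lambda>x. a x - b x) + 4 * L2sq PX (\<lambda>x. b x - c x) + 4 * L2sq PX (\<lambda>x. c x - e x)"
  using L2sq_tri[OF assms(1,2,4)] L2sq_tri[OF assms(2,3,4)] by linarith


lemma what_meas:
  fixes F :: "'w \<Rightarrow> 'n \<Rightarrow> 'x \<Rightarrow> real"
  assumes m1: "\<And>j k. (\<lambda>\<omega>. L2sq PX (\<lambda>x. F \<omega> j x - F \<omega> k x)) \<in> borel_measurable M"
    and m2: "\<And>j. (\<lambda>\<omega>. L2sq PX (F \<omega> j)) \<in> borel_measurable M"
  shows "(\<lambda>\<omega>. what V par lf PX a2 b n (F \<omega>) v) \<in> borel_measurable M"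
proof -
  have c1: "(\<lambda>\<omega>. C1 V par lf PX (F \<omega>) v) \<in> borel_measurable M"
    unfolding C1_def Let_def using m1 by measurable
  have c2: "(\<lambda>\<omega>. C2 V par lf PX (F \<omega>) v) \<in> borel_measurable M"
    unfolding C2_def Let_def using m2 by measurable
  have c3: "(\<lambda>\<omega>. C3 V par lf PX (F \<omega>) v) \<in> borel_measurable M"
    unfolding C3_def Let_def using m1 by measurable
  have np: "(\<lambda>\<omega>. neg_pow (g \<omega>) b) \<in> borel_measurable M" if "g \<in> borel_measurable M" for g
    unfolding neg_pow_def using that by measurable
  show ?thesis unfolding what_def using c1 np[OF c2] np[OF c3] by measurable
qed


theorem mainTheorem3:
  fixes V :: "'v set" and par :: "'v \<Rightarrow> 'v option" and r :: 'v
    and lf :: "'n::finite \<Rightarrow> 'v"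
    and PX :: "(real ^ 'n) measure" and m :: "real ^ 'n \<Rightarrow> real"
    and M :: "'w measure"
    and dh :: "nat \<Rightarrow> 'w \<Rightarrow> 'n \<Rightarrow> real ^ 'n \<Rightarrow> real"
    and a1 a2 b C :: real
  assumes tree: "rooted_tree V par r"
    and leaves: "bij_betw lf UNIV (tree_leaves V par)"
    and PX: "prob_space PX" "sets PX = sets borel"
    and diff: "\<And>x. m differentiable (at x)"
    and dm_L2: "\<And>j. sq_int PX (pderiv_j m j)"
    and M: "prob_space M"
    and dh_L2: "\<And>n j \<omega>. \<omega> \<in> space M \<Longrightarrow> sq_int PX (dh n \<omega> j)"
    and meas1: "\<And>n j k. (\<lambda>\<omega>. L2sq PX (\<lambda>x. dh n \<omega> j x - dh n \<omega> k x)) \<in> borel_measurable M"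
    and meas2: "\<And>n j. (\<lambda>\<omega>. L2sq PX (dh n \<omega> j)) \<in> borel_measurable M"
    and meas3: "\<And>n j. (\<lambda>\<omega>. L2sq PX (\<lambda>x. dh n \<omega> j x - pderiv_j m j x)) \<in> borel_measurable M"
    and a1: "a1 > 0" and C: "C > 0"
    and rate: "(\<lambda>n. measure M {\<omega> \<in> space M.
                 (\<forall>j. L2sq PX (\<lambda>x. dh n \<omega> j x - pderiv_j m j x) \<le> C * real n powr (- a1))})
               \<longlonglongrightarrow> 1"
    and a2: "a2 > 0" and b: "b > 0"
  shows
    "(\<forall>v\<in>V - Istar V par lf PX (pderiv_j m).
        \<exists>c>0. (\<lambda>n. measure M {\<omega> \<in> space M.
                  what V par lf PX a2 b n (dh n \<omega>) v \<ge> ereal (c * real n powr (min a1 a2 * b))})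
              \<longlonglongrightarrow> 1)
     \<and> (\<forall>v\<in>Istar V par lf PX (pderiv_j m).
        \<forall>\<epsilon>>0. \<exists>K N. \<forall>n\<ge>N. measure M {\<omega> \<in> space M.
                  what V par lf PX a2 b n (dh n \<omega>) v \<le> ereal (K * (1 + real n powr ((a2 - a1) * b)))}
                \<ge> 1 - \<epsilon>)"
proof -
  define d where "d = pderiv_j m"
  define e where "e = (\<lambda>n::nat. C * real n powr (- a1))"
  define G where "G = (\<lambda>n. {\<omega> \<in> space M. (\<forall>j. L2sq PX (\<lambda>x. dh n \<omega> j x - d j x) \<le> e n)})"
  define D where "D = (\<lambda>j k. L2sq PX (\<lambda>x. d j x - d k x))"
  define Dn where "Dn = (\<lambda>j. L2sq PX (d j))"
  have rate': "(\<lambda>n. measure M (G n)) \<longlonglongrightarrow> 1" using rate unfolding G_def e_def d_def .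
  have sqd: "\<And>j. sq_int PX (d j)" unfolding d_def by (rule dm_L2)
  have e_lim: "e \<longlonglongrightarrow> 0"
  proof -
    have "(\<lambda>n. real n powr (- a1)) \<longlonglongrightarrow> 0"
      using a1 by (intro tendsto_neg_powr filterlim_real_sequentially) auto
    from tendsto_mult[OF tendsto_const this, of C] show ?thesis unfolding e_def by simp
  qed
  have e_small: "\<forall>\<^sub>F n in sequentially. e n < \<delta>" if "\<delta> > 0" for \<delta>
    using order_tendstoD(2)[OF e_lim that] .
  have ge1: "\<forall>\<^sub>F n in sequentially. real n \<ge> 1"
    using eventually_ge_at_top[of "1::nat"] by eventually_elim auto
  have e_nonneg: "0 \<le> e n" for n unfolding e_def using C by auto
  have Gs: "G n \<subseteq> space M" for n unfolding G_def by auto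
  have Gdh: "L2sq PX (\<lambda>x. dh n \<omega> j x - d j x) \<le> e n" if "\<omega> \<in> G n" for n \<omega> j
    using that unfolding G_def by auto
  have Gsq: "sq_int PX (dh n \<omega> j)" if "\<omega> \<in> G n" for n \<omega> j
    using that dh_L2 unfolding G_def by auto
  have H_up: "L2sq PX (\<lambda>x. dh n \<omega> j x - dh n \<omega> k x) \<le> 6 * e n + 4 * D j k"
    if "\<omega> \<in> G n" for n \<omega> j k
  proof -
    have "L2sq PX (\<lambda>x. dh n \<omega> j x - dh n \<omega> k x) \<le> 2 * L2sq PX (\<lambda>x. dh n \<omega> j x - d j x)
        + 4 * L2sq PX (\<lambda>x. d j x - d k x) + 4 * L2sq PX (\<lambda>x. d k x - dh n \<omega> k x)"
      by (rule L2sq_quad[OF Gsq[OF that] sqd sqd Gsq[OF that]])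
    moreover have "L2sq PX (\<lambda>x. d k x - dh n \<omega> k x) \<le> e n"
      using Gdh[OF that, of k] L2sq_sym[of PX "d k"] by simp
    ultimately show ?thesis using Gdh[OF that, of j] unfolding D_def by linarith
  qed
  have H_lo: "D j k \<le> 6 * e n + 4 * L2sq PX (\<lambda>x. dh n \<omega> j x - dh n \<omega> k x)"
    if "\<omega> \<in> G n" for n \<omega> j k
  proof -
    have "L2sq PX (\<lambda>x. d j x - d k x) \<le> 2 * L2sq PX (\<lambda>x. d j x - dh n \<omega> j x)
        + 4 * L2sq PX (\<lambda>x. dh n \<omega> j x - dh n \<omega> k x) + 4 * L2sq PX (\<lambda>x. dh n \<omega> k x - d k x)"
      by (rule L2sq_quad[OF sqd Gsq[OF that] Gsq[OF that] sqd])
    moreover have "L2sq PX (\<lambda>x. d j x - dh n \<omega> j x) \<le> e n"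
      using Gdh[OF that, of j] L2sq_sym[of PX "d j"] by simp
    ultimately show ?thesis using Gdh[OF that, of k] unfolding D_def by linarith
  qed
  have Hn_up: "L2sq PX (dh n \<omega> j) \<le> 2 * e n + 2 * Dn j" if "\<omega> \<in> G n" for n \<omega> j
    using L2sq_norm_tri[OF Gsq[OF that, of j] sqd[of j]] Gdh[OF that, of j] unfolding Dn_def by linarith
  have Hn_lo: "Dn j \<le> 2 * e n + 2 * L2sq PX (dh n \<omega> j)" if "\<omega> \<in> G n" for n \<omega> j
    using L2sq_norm_tri[OF sqd[of j] Gsq[OF that, of j]] Gdh[OF that, of j] L2sq_sym[of PX "d j" "dh n \<omega> j"]
    unfolding Dn_def by linarith
  have Dsym: "D j k = D k j" for j k unfolding D_def by (rule L2sq_sym)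
  have Dself: "D j j = 0" for j unfolding D_def L2sq_def by simp
  have Dnn: "0 \<le> D j k" for j k unfolding D_def by (rule L2sq_nonneg)
  have Dnnn: "0 \<le> Dn j" for j unfolding Dn_def by (rule L2sq_nonneg)
  define W where "W = (\<lambda>n \<omega> v. what V par lf PX a2 b n (dh n \<omega>) v)"
  have Wmeas: "(\<lambda>\<omega>. W n \<omega> v) \<in> borel_measurable M" for n v
    unfolding W_def by (rule what_meas[OF meas1 meas2])
  show ?thesis
  proof (intro conjI ballI allI impI)
    fix v assume v: "v \<in> V - Istar V par lf PX (pderiv_j m)"
    let ?L = "le_set V par lf v" and ?S = "S_set V par lf v"
    have nI: "\<not> ((\<forall>j\<in>?L. Dn j \<noteq> 0) \<and> (\<forall>j\<in>?L. \<forall>k\<in>?L. D j k = 0) \<and>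
                 (\<exists>s\<in>?S. \<exists>j\<in>?L. D s j \<noteq> 0))"
      using v unfolding Istar_def D_def Dn_def d_def by auto
    have key: "\<exists>c>0. \<forall>\<^sub>F n in sequentially. \<forall>\<omega>\<in>G n. ereal (c * real n powr (min a1 a2 * b)) \<le> W n \<omega> v"
    proof (cases "\<exists>j\<in>?L. \<exists>k\<in>?L. D j k \<noteq> 0")
      case True
      then obtain j k where jk: "j \<in> ?L" "k \<in> ?L" "D j k \<noteq> 0" by auto
      define \<delta> where "\<delta> = D j k"
      have \<delta>: "\<delta> > 0" using jk Dnn[of j k] unfolding \<delta>_def by auto
      have "j \<noteq> k" using jk Dself by auto
      have "card ?L \<ge> 2"
      proof -
        have "{j, k} \<subseteq> ?L" using jk by auto
        then have "card {j, k} \<le> card ?L" by (intro card_mono) auto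
        then show ?thesis using \<open>j \<noteq> k\<close> by auto
      qed
      define \<beta> where "\<beta> = inverse (real (card ?L choose 2)) * (1/2)"
      have \<beta>: "\<beta> > 0" unfolding \<beta>_def using \<open>card ?L \<ge> 2\<close> by (auto simp: zero_less_binomial)
      define \<kappa> where "\<kappa> = \<beta> * (\<delta> / 8)"
      have \<kappa>: "\<kappa> > 0" unfolding \<kappa>_def using \<beta> \<delta> by auto
      show ?thesis
      proof (intro exI conjI)
        show "\<kappa> powr b > 0" using \<kappa> by auto
        have "\<delta> / 12 > 0" using \<delta> by auto
        from e_small[OF this] ge1
        show "\<forall>\<^sub>F n in sequentially. \<forall>\<omega>\<in>G n. ereal (\<kappa> powr b * real n powr (min a1 a2 * b)) \<le> W n \<omega> v"
        proof eventually_elim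
          case (elim n)
          show ?case
          proof
            fix \<omega> assume \<omega>: "\<omega> \<in> G n"
            have "\<delta> / 8 \<le> L2sq PX (\<lambda>x. dh n \<omega> j x - dh n \<omega> k x)"
              using H_lo[OF \<omega>, of j k] elim unfolding \<delta>_def by linarith
            then have "\<kappa> \<le> C1 V par lf PX (dh n \<omega>) v"
              using C1_lower[OF jk(1,2) \<open>j \<noteq> k\<close>, of PX "dh n \<omega>"] \<beta>
              unfolding \<kappa>_def \<beta>_def by (smt (verit) mult.assoc mult_left_mono)
            then have kb: "\<kappa> powr b * real n powr (min a1 a2 * b) \<le> (real n powr a2 * C1 V par lf PX (dh n \<omega>) v) powr b"
              using elim \<kappa> b a2 by (intro pow_lower1) auto
            show "ereal (\<kappa> powr b * real n powr (min a1 a2 * b)) \<le> W n \<omega> v"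
              unfolding W_def by (rule order.trans[OF _ what_ge1]) (simp add: kb)
          qed
        qed
      qed
    next
      case False
      then have ii: "\<forall>j\<in>?L. \<forall>k\<in>?L. D j k = 0" by auto
      show ?thesis
      proof (intro exI conjI)
        show "(6 * C) powr (-b) > 0" using C by auto
        show "\<forall>\<^sub>F n in sequentially. \<forall>\<omega>\<in>G n. ereal ((6 * C) powr (-b) * real n powr (min a1 a2 * b)) \<le> W n \<omega> v"
          using ge1
        proof eventually_elim
          case (elim n)
          show ?case
          proof
            fix \<omega> assume \<omega>: "\<omega> \<in> G n"
            show "ereal ((6 * C) powr (-b) * real n powr (min a1 a2 * b)) \<le> W n \<omega> v"
            proof (cases "\<exists>j\<in>?L. Dn j = 0")
              case True
              then obtain j where j: "j \<in> ?L" "Dn j = 0" by auto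
              have "Dn k = 0" if "k \<in> ?L" for k
                using L2sq_norm_tri[OF sqd sqd, of k j] ii that j Dnnn[of k]
                unfolding Dn_def D_def by fastforce
              then have "L2sq PX (dh n \<omega> k) \<le> 6 * e n" if "k \<in> ?L" for k
                using Hn_up[OF \<omega>, of k] that e_nonneg[of n] by fastforce
              then have "C2 V par lf PX (dh n \<omega>) v \<le> 6 * e n"
                using e_nonneg[of n] by (intro C2_upper) auto
              then have "ereal ((6 * C) powr (-b) * real n powr (min a1 a2 * b)) \<le> neg_pow (C2 V par lf PX (dh n \<omega>) v) b"
                using elim C b a1 C2_nonneg unfolding e_def by (intro pow_lower2) auto
              then show ?thesis unfolding W_def by (rule order.trans[OF _ what_ge2])
            next
              case False
              then have iii: "\<forall>s\<in>?S. \<forall>j\<in>?L. D s j = 0" using nI ii by auto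
              have "L2sq PX (\<lambda>x. dh n \<omega> j x - dh n \<omega> l x) \<le> 6 * e n" if "j \<in> ?L" "l \<in> ?S" for j l
                using H_up[OF \<omega>, of j l] iii that Dsym[of j l] by fastforce
              then have "C3 V par lf PX (dh n \<omega>) v \<le> 6 * e n"
                using e_nonneg[of n] by (intro C3_upper) auto
              then have "ereal ((6 * C) powr (-b) * real n powr (min a1 a2 * b)) \<le> neg_pow (C3 V par lf PX (dh n \<omega>) v) b"
                using elim C b a1 C3_nonneg unfolding e_def by (intro pow_lower2) auto
              then show ?thesis unfolding W_def by (rule order.trans[OF _ what_ge3])
            qed
          qed
        qed
      qed
    qed
    then obtain c where c: "c > 0"
      and ev: "\<forall>\<^sub>F n in sequentially. \<forall>\<omega>\<in>G n. ereal (c * real n powr (min a1 a2 * b)) \<le> W n \<omega> v"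
      by blast
    have "(\<lambda>n. measure M {\<omega> \<in> space M. W n \<omega> v \<ge> ereal (c * real n powr (min a1 a2 * b))}) \<longlonglongrightarrow> 1"
    proof (rule prob_to_1[OF M rate'])
      show "\<forall>\<^sub>F n in sequentially. G n \<subseteq> {\<omega> \<in> space M. W n \<omega> v \<ge> ereal (c * real n powr (min a1 a2 * b))}"
        using ev by eventually_elim (use Gs in auto)
      show "{\<omega> \<in> space M. W n \<omega> v \<ge> ereal (c * real n powr (min a1 a2 * b))} \<in> sets M" for n
        using Wmeas[of n v] by measurable
    qed
    then show "\<exists>c>0. (\<lambda>n. measure M {\<omega> \<in> space M.
                  what V par lf PX a2 b n (dh n \<omega>) v \<ge> ereal (c * real n powr (min a1 a2 * b))})
              \<longlonglongrightarrow> 1"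
      using c unfolding W_def by blast
  next
    fix v and \<epsilon> :: real
    assume v: "v \<in> Istar V par lf PX (pderiv_j m)" and eps: "\<epsilon> > 0"
    let ?L = "le_set V par lf v" and ?S = "S_set V par lf v"
    have i: "\<forall>j\<in>?L. Dn j \<noteq> 0" and ii: "\<forall>j\<in>?L. \<forall>k\<in>?L. D j k = 0"
      and iii: "\<exists>s\<in>?S. \<exists>j\<in>?L. D s j \<noteq> 0"
      using v unfolding Istar_def D_def Dn_def d_def by auto
    obtain s0 j1 where s0: "s0 \<in> ?S" and j1: "j1 \<in> ?L" and D0: "D s0 j1 \<noteq> 0" using iii by auto
    define \<delta>2 where "\<delta>2 = Dn j1"
    define \<delta>3 where "\<delta>3 = D j1 s0"
    have \<delta>2: "\<delta>2 > 0" using i j1 Dnnn[of j1] unfolding \<delta>2_def by auto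
    have \<delta>3: "\<delta>3 > 0" using D0 Dsym[of s0 j1] Dnn[of j1 s0] unfolding \<delta>3_def by auto
    have cL: "card ?L > 0" using j1 by (auto simp: card_gt_0_iff)
    have cS: "card ?S > 0" using s0 by (auto simp: card_gt_0_iff)
    define \<gamma>2 where "\<gamma>2 = inverse (real (card ?L)) * (\<delta>2 / 4)"
    define \<gamma>3 where "\<gamma>3 = inverse (real (card ?S) * real (card ?L)) * (\<delta>3 / 8)"
    have \<gamma>2: "\<gamma>2 > 0" unfolding \<gamma>2_def using cL \<delta>2 by auto
    have \<gamma>3: "\<gamma>3 > 0" unfolding \<gamma>3_def using cL cS \<delta>3 by auto
    define K1 where "K1 = inverse (real (card ?L choose 2)) * ((1/2) * (real (card ?L) * (real (card ?L) * 6)))"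
    have K1: "K1 \<ge> 0" unfolding K1_def by auto
    define K where "K = (K1 * C) powr b + \<gamma>2 powr (-b) + \<gamma>3 powr (-b)"
    have "\<forall>\<^sub>F n in sequentially. G n \<subseteq> {\<omega> \<in> space M. W n \<omega> v \<le> ereal (K * (1 + real n powr ((a2 - a1) * b)))}"
    proof -
      have "\<delta>2 / 4 > 0" "\<delta>3 / 12 > 0" using \<delta>2 \<delta>3 by auto
      from e_small[OF this(1)] e_small[OF this(2)] ge1
      show ?thesis
      proof eventually_elim
        case (elim n)
        show ?case
        proof
          fix \<omega> assume \<omega>: "\<omega> \<in> G n"
          let ?X = "real n powr a2 * C1 V par lf PX (dh n \<omega>) v"
          let ?p = "real n powr ((a2 - a1) * b)"
          have "\<delta>2 / 4 \<le> L2sq PX (dh n \<omega> j1)"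
            using Hn_lo[OF \<omega>, of j1] elim unfolding \<delta>2_def by linarith
          then have "\<gamma>2 \<le> C2 V par lf PX (dh n \<omega>) v"
            using C2_lower[OF j1, of PX "dh n \<omega>"] unfolding \<gamma>2_def
            by (smt (verit) inverse_nonnegative_iff_nonnegative mult_left_mono of_nat_0_le_iff)
          from neg_pow_upper[OF this \<gamma>2] b
          have n2: "neg_pow (C2 V par lf PX (dh n \<omega>) v) b = ereal ((C2 V par lf PX (dh n \<omega>) v) powr (-b))"
            "(C2 V par lf PX (dh n \<omega>) v) powr (-b) \<le> \<gamma>2 powr (-b)" by auto
          have "\<delta>3 / 8 \<le> L2sq PX (\<lambda>x. dh n \<omega> j1 x - dh n \<omega> s0 x)"
            using H_lo[OF \<omega>, of j1 s0] elim unfolding \<delta>3_def by linarith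
          then have "\<gamma>3 \<le> C3 V par lf PX (dh n \<omega>) v"
            using C3_lower[OF j1 s0, of PX "dh n \<omega>"] unfolding \<gamma>3_def
            by (smt (verit) inverse_nonnegative_iff_nonnegative mult_left_mono of_nat_0_le_iff mult_nonneg_nonneg)
          from neg_pow_upper[OF this \<gamma>3] b
          have n3: "neg_pow (C3 V par lf PX (dh n \<omega>) v) b = ereal ((C3 V par lf PX (dh n \<omega>) v) powr (-b))"
            "(C3 V par lf PX (dh n \<omega>) v) powr (-b) \<le> \<gamma>3 powr (-b)" by auto
          have "L2sq PX (\<lambda>x. dh n \<omega> j x - dh n \<omega> k x) \<le> 6 * e n" if "j \<in> ?L" "k \<in> ?L" for j k
            using H_up[OF \<omega>, of j k] ii that by fastforce
          then have "C1 V par lf PX (dh n \<omega>) v \<le> inverse (real (card ?L choose 2)) * ((1/2) * (real (card ?L) * (real (card ?L) * (6 * e n))))"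
            using e_nonneg[of n] by (intro C1_upper) auto
          also have "\<dots> = K1 * (C * real n powr (- a1))" unfolding K1_def e_def by (simp add: algebra_simps)
          finally have "?X powr b \<le> (K1 * C) powr b * ?p"
            using elim K1 C b C1_nonneg by (intro pow_upper1) auto
          then have "?X powr b + (C2 V par lf PX (dh n \<omega>) v) powr (-b) + (C3 V par lf PX (dh n \<omega>) v) powr (-b)
                  \<le> (K1 * C) powr b * ?p + \<gamma>2 powr (-b) + \<gamma>3 powr (-b)"
            using n2(2) n3(2) by linarith
          also have "\<dots> \<le> K * (1 + ?p)"
            unfolding K_def by (simp add: algebra_simps)
          finally have "W n \<omega> v \<le> ereal (K * (1 + ?p))"
            unfolding W_def what_def n2(1) n3(1) by simp
          then show "\<omega> \<in> {\<omega> \<in> space M. W n \<omega> v \<le> ereal (K * (1 + ?p))}" using \<omega> Gs by auto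
        qed
      qed
    qed
    moreover have "{\<omega> \<in> space M. W n \<omega> v \<le> ereal (K * (1 + real n powr ((a2 - a1) * b)))} \<in> sets M" for n
      using Wmeas[of n v] by measurable
    ultimately have "\<exists>N. \<forall>n\<ge>N. measure M {\<omega> \<in> space M. W n \<omega> v \<le> ereal (K * (1 + real n powr ((a2 - a1) * b)))} \<ge> 1 - \<epsilon>"
      by (rule prob_ge[OF M rate' _ _ eps])
    then show "\<exists>K N. \<forall>n\<ge>N. measure M {\<omega> \<in> space M.
                  what V par lf PX a2 b n (dh n \<omega>) v \<le> ereal (K * (1 + real n powr ((a2 - a1) * b)))}
                \<ge> 1 - \<epsilon>" unfolding W_def by blast
  qed
qed

end
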